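(* Define $f_{\mathrm{HbM}}(X)=\operatorname{diag}(|X|\mathbf{1}_n)^{-1}XX^{\top}$ and consider the dynamical system $X(t+1)=f_{\mathrm{HbM}}(X(t))$, $t\in\mathbb{Z}_{\ge0}$. Pick $X_0\in\mathcal{S}_{\mathrm{nz\text{-}row}}$. Then: (i) $f_{\mathrm{HbM}}$ is well-defined for every $X\in\mathcal{S}_{\mathrm{nz\text{-}row}}$ and maps $\mathcal{S}_{\mathrm{nz\text{-}row}}$ into $\mathcal{S}^{+}_{\mathrm{s\text{-}symm}}$; (ii) the solution $X(t)$, $t\in\mathbb{Z}_{\ge0}$, from the initial condition $X(0)=X_0$ exists and is unique; (iii) every such solution satisfies $\max_{i,j}|X_{ij}(t+1)|\le\max_{i,j}|X_{ij}(t)|\le\max_{i,j}|X_{ij}(0)|$ for all $t$; (iv) for every $c>0$, the trajectory $cX(t)$ is the solution from the initial condition $X(0)=cX_0$.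
   Context: $\mathbf{1}_n$ is the all-ones vector, $|X|$ is the entry-wise absolute value, $\operatorname{sign}$ is entry-wise sign, $X_{i*}$ is the $i$-th row. $\mathcal{S}_{\mathrm{nz\text{-}row}}=\{X\in\mathbb{R}^{n\times n}: X_{i*}\neq\mathbf{0}_n^{\top}\text{ for every }i\}$. $\mathcal{S}^{+}_{\mathrm{s\text{-}symm}}=\{X\in\mathbb{R}^{n\times n}:\operatorname{sign}(X)=\operatorname{sign}(X)^{\top}\text{ and }X_{ii}>0\text{ for every }i\}$. *)

theory Defs
  imports "HOL-Analysis.Analysis"
begin

text \<open>Square matrices of a fixed size n = CARD('n) are modelled as real^'n^'n.\<close>

definition ones_vec :: "real^'n" where
  "ones_vec = (\<chi> i. 1)"

definition abs_mat :: "real^'n^'m \<Rightarrow> real^'n^'m" where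
  "abs_mat X = (\<chi> i j. \<bar>X $ i $ j\<bar>)"

definition sign_mat :: "real^'n^'m \<Rightarrow> real^'n^'m" where
  "sign_mat X = (\<chi> i j. sgn (X $ i $ j))"

definition diag_mat :: "real^'n \<Rightarrow> real^'n^'n" where
  "diag_mat v = (\<chi> i j. if i = j then v $ i else 0)"

definition S_nz_row :: "(real^'n^'n) set" where
  "S_nz_row = {X. \<forall>i. X $ i \<noteq> 0}"

definition S_s_symm_pos :: "(real^'n^'n) set" where
  "S_s_symm_pos = {X. sign_mat X = transpose (sign_mat X) \<and> (\<forall>i. X $ i $ i > 0)}"

definition f_HbM :: "real^'n^'n \<Rightarrow> real^'n^'n" where
  "f_HbM X = matrix_inv (diag_mat (abs_mat X *v ones_vec)) ** X ** transpose X"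

text \<open>A solution of X(t+1) = f_HbM(X(t)) from X(0) = X0: every state lies in the
  domain S_nz_row where f_HbM is well-defined, and the recursion holds.\<close>
definition is_HbM_solution :: "(nat \<Rightarrow> real^'n^'n) \<Rightarrow> real^'n^'n \<Rightarrow> bool" where
  "is_HbM_solution X X0 \<longleftrightarrow> X 0 = X0 \<and> (\<forall>t. X t \<in> S_nz_row \<and> X (Suc t) = f_HbM (X t))"

definition max_abs_entry :: "real^'n^'n \<Rightarrow> real" where
  "max_abs_entry X = Max {\<bar>X $ i $ j\<bar> | i j. True}"

end

theory Submission
  imports Defs
begin

definition rs :: "real^'n^'n \<Rightarrow> 'n \<Rightarrow> real" where
  "rs X i = (\<Sum>k\<in>UNIV. \<bar>X $ i $ k\<bar>)"

lemma absones: "(abs_mat X *v ones_vec) $ i = rs X i"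
  by (simp add: abs_mat_def ones_vec_def matrix_vector_mult_def rs_def)

lemma rs_pos: assumes "X \<in> S_nz_row" shows "rs X i > 0"
proof -
  from assms have "X $ i \<noteq> 0" by (simp add: S_nz_row_def)
  then obtain k where k: "X $ i $ k \<noteq> 0" by (metis vec_eq_iff zero_index)
  have "\<bar>X $ i $ k\<bar> \<le> rs X i" unfolding rs_def
    by (rule member_le_sum) auto
  with k show ?thesis by linarith
qed

lemma diag_mult: "diag_mat a ** diag_mat b = diag_mat (\<chi> i. a $ i * b $ i)"
proof -
  have "\<And>i j. (\<Sum>k\<in>UNIV. (if i = k then a $ i else 0) * (if k = j then b $ k else 0))
     = (if i = j then a $ i * b $ i else 0)"
  proof -
    fix i j :: 'a
    have "(\<Sum>k\<in>UNIV. (if i = k then a $ i else 0) * (if k = j then b $ k else 0))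
      = (\<Sum>k\<in>UNIV. if k = i then (if i = j then a $ i * b $ i else 0) else 0)"
      by (rule sum.cong) auto
    also have "\<dots> = (if i = j then a $ i * b $ i else 0)" by simp
    finally show "(\<Sum>k\<in>UNIV. (if i = k then a $ i else 0) * (if k = j then b $ k else 0))
     = (if i = j then a $ i * b $ i else 0)" .
  qed
  then show ?thesis
    by (simp add: diag_mat_def matrix_matrix_mult_def vec_eq_iff)
qed

lemma diag_one: "(\<forall>i. a $ i = 1) \<Longrightarrow> diag_mat a = mat 1"
  by (simp add: diag_mat_def mat_def vec_eq_iff)

lemma inv_unique:
  fixes A B :: "real^'n^'n"
  assumes "A ** B = mat 1" "B ** A = mat 1"
  shows "invertible A \<and> matrix_inv A = B"
proof -
  have inv: "invertible A" using assms invertible_def by blast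
  define C where "C = matrix_inv A"
  have "A ** C = mat 1 \<and> C ** A = mat 1"
    unfolding C_def matrix_inv_def by (rule someI_ex) (use inv invertible_def in blast)
  then have "C = C ** (A ** B)" using assms by (simp add: matrix_mul_rid)
  also have "\<dots> = (C ** A) ** B" by (simp add: matrix_mul_assoc)
  also have "\<dots> = B" using \<open>A ** C = mat 1 \<and> C ** A = mat 1\<close> by (simp add: matrix_mul_lid)
  finally show ?thesis using inv C_def by simp
qed

lemma diag_inv:
  assumes "\<forall>i. a $ i \<noteq> 0"
  shows "invertible (diag_mat a) \<and> matrix_inv (diag_mat a) = diag_mat (\<chi> i. 1 / a $ i)"
  apply (rule inv_unique)
  using assms by (simp_all add: diag_mult diag_one)

lemma f_entry:
  fixes X :: "real^'n^'n"
  assumes "X \<in> S_nz_row"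
  shows "f_HbM X $ i $ j = (\<Sum>k\<in>UNIV. X $ i $ k * X $ j $ k) / rs X i"
proof -
  have ne: "\<forall>i. (abs_mat X *v ones_vec) $ i \<noteq> 0"
    using rs_pos[OF assms] absones by (metis less_irrefl)
  have fe: "f_HbM X = diag_mat (\<chi> i. 1 / rs X i) ** (X ** transpose X)"
    unfolding f_HbM_def using diag_inv[OF ne]
    by (simp add: absones matrix_mul_assoc)
  moreover have "(diag_mat (\<chi> i. 1 / rs X i) ** M) $ i $ j = M $ i $ j / rs X i" for M :: "real^'n^'n"
  proof -
    have "(\<Sum>k\<in>UNIV. (if i = k then (\<chi> i. 1 / rs X i) $ i else 0) * M $ k $ j)
        = (\<Sum>k\<in>UNIV. if k = i then M $ i $ j / rs X i else 0)"
      by (rule sum.cong) auto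
    then show ?thesis by (simp add: diag_mat_def matrix_matrix_mult_def)
  qed
  then have "f_HbM X $ i $ j = (X ** transpose X) $ i $ j / rs X i"
    unfolding fe .
  then show ?thesis
    by (simp add: matrix_matrix_mult_def transpose_def)
qed

lemma f_in:
  fixes X :: "real^'n^'n"
  assumes "X \<in> S_nz_row"
  shows "f_HbM X \<in> S_s_symm_pos"
proof -
  have sg: "sgn (f_HbM X $ i $ j) = sgn (\<Sum>k\<in>UNIV. X $ i $ k * X $ j $ k)" for i j
    using rs_pos[OF assms, of i] by (simp add: f_entry[OF assms] sgn_divide)
  have sym: "sign_mat (f_HbM X) = transpose (sign_mat (f_HbM X))"
    by (simp add: sign_mat_def transpose_def vec_eq_iff sg mult.commute)
  have "f_HbM X $ i $ i > 0" for i
  proof -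
    from assms have "X $ i \<noteq> 0" by (simp add: S_nz_row_def)
    then obtain k where k: "X $ i $ k \<noteq> 0" by (metis vec_eq_iff zero_index)
    have "0 < X $ i $ k * X $ i $ k" using k by (metis not_real_square_gt_zero)
    also have "\<dots> \<le> (\<Sum>k\<in>UNIV. X $ i $ k * X $ i $ k)"
      by (rule member_le_sum) auto
    finally show ?thesis using rs_pos[OF assms, of i] by (simp add: f_entry[OF assms])
  qed
  with sym show ?thesis by (simp add: S_s_symm_pos_def)
qed

lemma f_nz:
  fixes X :: "real^'n^'n"
  assumes "X \<in> S_nz_row" shows "f_HbM X \<in> S_nz_row"
  unfolding S_nz_row_def
proof (intro CollectI allI notI)
  fix i assume "f_HbM X $ i = 0"
  then have "f_HbM X $ i $ i = 0" by simp
  moreover have "f_HbM X $ i $ i > 0" using f_in[OF assms] by (simp add: S_s_symm_pos_def)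
  ultimately show False by simp
qed

lemma mae_ge: "\<bar>X $ i $ j\<bar> \<le> max_abs_entry X"
  unfolding max_abs_entry_def
proof (rule Max_ge)
  have "{\<bar>X $ i $ j\<bar> | i j. True} = (\<lambda>(i,j). \<bar>X $ i $ j\<bar>) ` UNIV" by auto
  then show "finite {\<bar>X $ i $ j\<bar> | i j. True}" by simp
qed auto

lemma mae_le: assumes "\<And>i j. \<bar>X $ i $ j\<bar> \<le> M" shows "max_abs_entry X \<le> M"
  unfolding max_abs_entry_def
proof (rule Max.boundedI)
  have "{\<bar>X $ i $ j\<bar> | i j. True} = (\<lambda>(i,j). \<bar>X $ i $ j\<bar>) ` UNIV" by auto
  then show "finite {\<bar>X $ i $ j\<bar> | i j. True}" by simp
qed (use assms in auto)

lemma f_mae: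
  fixes X :: "real^'n^'n"
  assumes "X \<in> S_nz_row"
  shows "max_abs_entry (f_HbM X) \<le> max_abs_entry X"
proof (rule mae_le)
  fix i j
  let ?M = "max_abs_entry X"
  have "\<bar>\<Sum>k\<in>UNIV. X $ i $ k * X $ j $ k\<bar> \<le> (\<Sum>k\<in>UNIV. \<bar>X $ i $ k\<bar> * \<bar>X $ j $ k\<bar>)"
  proof -
    have "\<bar>\<Sum>k\<in>UNIV. X $ i $ k * X $ j $ k\<bar> \<le> (\<Sum>k\<in>UNIV. \<bar>X $ i $ k * X $ j $ k\<bar>)"
      by (rule sum_abs)
    then show ?thesis by (simp add: abs_mult)
  qed
  also have "\<dots> \<le> (\<Sum>k\<in>UNIV. \<bar>X $ i $ k\<bar> * ?M)"
    by (rule sum_mono) (simp add: mae_ge mult_left_mono)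
  also have "\<dots> = rs X i * ?M" by (simp add: rs_def sum_distrib_right)
  finally have "\<bar>\<Sum>k\<in>UNIV. X $ i $ k * X $ j $ k\<bar> \<le> rs X i * ?M" .
  then show "\<bar>f_HbM X $ i $ j\<bar> \<le> ?M"
    using rs_pos[OF assms, of i]
    by (simp add: f_entry[OF assms] abs_div pos_divide_le_eq mult.commute)
qed

lemma f_scale:
  fixes X :: "real^'n^'n"
  assumes "X \<in> S_nz_row" "c > (0::real)"
  shows "f_HbM (c *\<^sub>R X) = c *\<^sub>R f_HbM X"
proof -
  have cX: "c *\<^sub>R X \<in> S_nz_row" using assms by (simp add: S_nz_row_def)
  have "rs (c *\<^sub>R X) i = c * rs X i" for i
    using assms(2) by (simp add: rs_def abs_mult sum_distrib_left)
  moreover have "(\<Sum>k\<in>UNIV. (c *\<^sub>R X) $ i $ k * (c *\<^sub>R X) $ j $ k)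
     = c * c * (\<Sum>k\<in>UNIV. X $ i $ k * X $ j $ k)" for i j
    by (simp add: sum_distrib_left algebra_simps)
  ultimately show ?thesis
    using rs_pos[OF assms(1)] assms(2)
    by (simp add: vec_eq_iff f_entry[OF cX] f_entry[OF assms(1)] field_simps)
qed

theorem proposition3p3:
  fixes X0 :: "real^'n^'n"
  assumes "X0 \<in> S_nz_row"
  shows "(\<forall>X \<in> (S_nz_row :: (real^'n^'n) set).
            invertible (diag_mat (abs_mat X *v ones_vec)) \<and> f_HbM X \<in> S_s_symm_pos)
    \<and> (\<exists>!X. is_HbM_solution X X0)
    \<and> (\<forall>X. is_HbM_solution X X0 \<longrightarrow>
          (\<forall>t. max_abs_entry (X (Suc t)) \<le> max_abs_entry (X t)
               \<and> max_abs_entry (X t) \<le> max_abs_entry (X 0)))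
    \<and> (\<forall>c > 0. \<forall>X. is_HbM_solution X X0 \<longrightarrow>
          is_HbM_solution (\<lambda>t. c *\<^sub>R X t) (c *\<^sub>R X0))"
proof (intro conjI)
  show "\<forall>X \<in> (S_nz_row :: (real^'n^'n) set).
            invertible (diag_mat (abs_mat X *v ones_vec)) \<and> f_HbM X \<in> S_s_symm_pos"
  proof
    fix X :: "real^'n^'n" assume X: "X \<in> S_nz_row"
    have ne: "\<forall>i. (abs_mat X *v ones_vec) $ i \<noteq> 0"
      using rs_pos[OF X] absones by (metis less_irrefl)
    show "invertible (diag_mat (abs_mat X *v ones_vec)) \<and> f_HbM X \<in> S_s_symm_pos"
      using diag_inv[OF ne] f_in[OF X] by simp
  qed
next
  define Y where "Y = (\<lambda>t. (f_HbM ^^ t) X0)"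
  have Ynz: "Y t \<in> S_nz_row" for t
    by (induction t) (simp_all add: Y_def assms f_nz)
  have "is_HbM_solution Y X0"
    unfolding is_HbM_solution_def using Ynz by (simp add: Y_def)
  moreover have "Z = Y" if "is_HbM_solution Z X0" for Z
  proof
    fix t show "Z t = Y t"
      using that by (induction t) (simp_all add: is_HbM_solution_def Y_def)
  qed
  ultimately show "\<exists>!X. is_HbM_solution X X0" by blast
next
  show "\<forall>X. is_HbM_solution X X0 \<longrightarrow>
          (\<forall>t. max_abs_entry (X (Suc t)) \<le> max_abs_entry (X t)
               \<and> max_abs_entry (X t) \<le> max_abs_entry (X 0))"
  proof (intro allI impI)
    fix X t assume s: "is_HbM_solution X X0"
    have step: "max_abs_entry (X (Suc t)) \<le> max_abs_entry (X t)" for t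
      using s f_mae unfolding is_HbM_solution_def by metis
    have "max_abs_entry (X t) \<le> max_abs_entry (X 0)"
      by (induction t) (use step order_trans in auto)
    with step show "max_abs_entry (X (Suc t)) \<le> max_abs_entry (X t)
               \<and> max_abs_entry (X t) \<le> max_abs_entry (X 0)" by blast
  qed
next
  show "\<forall>c > 0. \<forall>X. is_HbM_solution X X0 \<longrightarrow>
          is_HbM_solution (\<lambda>t. c *\<^sub>R X t) (c *\<^sub>R X0)"
  proof (intro allI impI)
    fix c :: real and X assume c: "c > 0" and s: "is_HbM_solution X X0"
    show "is_HbM_solution (\<lambda>t. c *\<^sub>R X t) (c *\<^sub>R X0)"
    proof -
      have nz: "X t \<in> S_nz_row" "X (Suc t) = f_HbM (X t)" for t
        using s unfolding is_HbM_solution_def by auto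
      have "c *\<^sub>R X t \<in> S_nz_row" for t using nz(1)[of t] c by (simp add: S_nz_row_def)
      moreover have "c *\<^sub>R X (Suc t) = f_HbM (c *\<^sub>R X t)" for t
        using f_scale[OF nz(1)[of t] c] nz(2)[of t] by simp
      ultimately show ?thesis using s unfolding is_HbM_solution_def by simp
    qed
  qed
qed

end
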